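(* Let $L$ be a split regular Hom-Lie color algebra with symmetric root system $\Lambda$. For every $\alpha\in\Lambda$, the graded subspace $L_{\Lambda_\alpha}=H_{\Lambda_\alpha}\oplus V_{\Lambda_\alpha}$ is a subalgebra of $L$, i.e. $[L_{\Lambda_\alpha},L_{\Lambda_\alpha}]\subset L_{\Lambda_\alpha}$ and $\phi(L_{\Lambda_\alpha})=L_{\Lambda_\alpha}$.
   Context: Let $\mathbb{K}$ be a field and $\Gamma$ an abelian group. A bi-character is $\varepsilon:\Gamma\times\Gamma\to\mathbb{K}\setminus\{0\}$ with $\varepsilon(a,b)\varepsilon(b,a)=1$, $\varepsilon(a,b+c)=\varepsilon(a,b)\varepsilon(a,c)$, $\varepsilon(a+b,c)=\varepsilon(a,c)\varepsilon(b,c)$. A Hom-Lie color algebra $(L,[\cdot,\cdot],\phi,\varepsilon)$ is a $\Gamma$-graded space $L=\bigoplus_gL_g$ with bilinear $[\cdot,\cdot]$, $[L_g,L_h]\subset L_{g+h}$, linear $\phi$ with $\phi(L_g)\subset L_g$, $\phi([x,y])=[\phi x,\phi y]$, such that for homogeneous $x,y,z$ of degrees $\bar x,\bar y,\bar z$: $[x,y]=-\varepsilon(\bar x,\bar y)[y,x]$ and $\varepsilon(\bar z,\bar x)[\phi(x),[y,z]]+\varepsilon(\bar x,\bar y)[\phi(y),[z,x]]+\varepsilon(\bar y,\bar z)[\phi(z),[x,y]]=0$; regular means $\phi$ bijective. A subalgebra is a graded subspace $A$ with $[A,A]\subset A$, $\phi(A)=A$; abelian if $[A,A]=0$. $H=\bigoplus_gH_g$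 is a maximal abelian graded subalgebra (so $\phi(H_0)=H_0$). For linear $\alpha:H_0\to\mathbb{K}$, $L_\alpha=\{v:[h,v]=\alpha(h)\phi(v)\ \forall h\in H_0\}$; $\Lambda=\{\alpha\in H_0^*\setminus\{0\}:L_\alpha\neq0\}$; $L$ is split if $L=H\oplus(\bigoplus_{\alpha\in\Lambda}L_\alpha)$. $\Lambda$ is symmetric if $\alpha\in\Lambda\Rightarrow-\alpha\in\Lambda$. For $z\in\mathbb{Z}$, $\alpha\phi^{z}:=\alpha\circ(\phi|_{H_0})^{z}$; $\mathbb{N}=\{0,1,2,\dots\}$. Connection: for $\alpha,\beta\in\Lambda$, $\alpha$ is connected to $\beta$ if there exist $k\ge1$ and $\alpha_1,\dots,\alpha_k\in\Lambda$ such that: if $k=1$, $\alpha_1\in\{\alpha\phi^{-n}:n\in\mathbb{N}\}\cap\{\pm\beta\phi^{-m}:m\in\mathbb{N}\}$; if $k\ge2$, then $\alpha_1\in\{\alpha\phi^{-n}:n\in\mathbb{N}\}$, for each $i=1,\dots,k-2$ one has $\alpha_1\phi^{-i}+\alpha_2\phi^{-i}+\alpha_3\phi^{-i+1}+\cdots+\alpha_{i+1}\phi^{-1}\in\Lambda$, and $\alpha_1\phi^{-k+1}+\alpha_2\phi^{-k+1}+\alpha_3\phi^{-k+2}+\cdots+\alpha_k\phi^{-1}\in\{\pm\beta\phi^{-m}:m\in\mathbb{N}\}$. Connectedness $\sim$ is an equivalence relation on $\Lambda$; $\Lambda_\alpha:=\{\beta\in\Lambda:\beta\sim\alpha\}$.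 Define $H_{\Lambda_\alpha}:=\mathrm{span}_{\mathbb{K}}\{[L_\beta,L_{-\beta}]:\beta\in\Lambda_\alpha\}\subset H$, $V_{\Lambda_\alpha}:=\bigoplus_{\beta\in\Lambda_\alpha}L_\beta$, and $L_{\Lambda_\alpha}:=H_{\Lambda_\alpha}\oplus V_{\Lambda_\alpha}$. *)

theory Defs
  imports Complex_Main
begin

text \<open>The field K is a type 'k of class field, the abelian group Gamma is a
type 'g of class ab_group_add. The algebra L is the whole of a type 'v (of class ab_group_add)
equipped with a scalar multiplication sm :: 'k => 'v => 'v making it a K-vector space.
The grading is a family Lg :: 'g => 'v set of subspaces with L = direct sum of the Lg g.
Linear forms alpha on H_0 are represented as functions 'v => 'k that are additive and
homogeneous on H_0 and vanish outside H_0 (so equality of forms is equality of functions).\<close>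

definition bichar :: "('g::ab_group_add \<Rightarrow> 'g \<Rightarrow> 'k::field) \<Rightarrow> bool" where
  "bichar \<epsilon> \<longleftrightarrow> (\<forall>a b. \<epsilon> a b \<noteq> 0) \<and> (\<forall>a b. \<epsilon> a b * \<epsilon> b a = 1)
     \<and> (\<forall>a b c. \<epsilon> a (b + c) = \<epsilon> a b * \<epsilon> a c)
     \<and> (\<forall>a b c. \<epsilon> (a + b) c = \<epsilon> a c * \<epsilon> b c)"

definition graded_space :: "('k::field \<Rightarrow> 'v::ab_group_add \<Rightarrow> 'v) \<Rightarrow> ('g::ab_group_add \<Rightarrow> 'v set) \<Rightarrow> bool" where
  "graded_space sm Lg \<longleftrightarrow> vector_space sm \<and> (\<forall>g. module.subspace sm (Lg g))
     \<and> (\<forall>v. \<exists>S c. finite S \<and> (\<forall>g\<in>S. c g \<in> Lg g) \<and> v = sum c S)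
     \<and> (\<forall>S c. finite S \<longrightarrow> (\<forall>g\<in>S. c g \<in> Lg g) \<longrightarrow> sum c S = 0 \<longrightarrow> (\<forall>g\<in>S. c g = 0))"

definition hom_lie_color ::
  "('k::field \<Rightarrow> 'v::ab_group_add \<Rightarrow> 'v) \<Rightarrow> ('g::ab_group_add \<Rightarrow> 'v set)
    \<Rightarrow> ('v \<Rightarrow> 'v \<Rightarrow> 'v) \<Rightarrow> ('v \<Rightarrow> 'v) \<Rightarrow> ('g \<Rightarrow> 'g \<Rightarrow> 'k) \<Rightarrow> bool" where
  "hom_lie_color sm Lg br \<phi> \<epsilon> \<longleftrightarrow>
     graded_space sm Lg \<and> bichar \<epsilon>
     \<and> (\<forall>x. Vector_Spaces.linear sm sm (br x)) \<and> (\<forall>y. Vector_Spaces.linear sm sm (\<lambda>x. br x y))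
     \<and> (\<forall>g h x y. x \<in> Lg g \<longrightarrow> y \<in> Lg h \<longrightarrow> br x y \<in> Lg (g + h))
     \<and> Vector_Spaces.linear sm sm \<phi> \<and> (\<forall>g. \<phi> ` Lg g \<subseteq> Lg g)
     \<and> (\<forall>x y. \<phi> (br x y) = br (\<phi> x) (\<phi> y))
     \<and> (\<forall>a b x y. x \<in> Lg a \<longrightarrow> y \<in> Lg b \<longrightarrow> br x y = - sm (\<epsilon> a b) (br y x))
     \<and> (\<forall>a b c x y z. x \<in> Lg a \<longrightarrow> y \<in> Lg b \<longrightarrow> z \<in> Lg c \<longrightarrow>
          sm (\<epsilon> c a) (br (\<phi> x) (br y z)) + sm (\<epsilon> a b) (br (\<phi> y) (br z x))
          + sm (\<epsilon> b c) (br (\<phi> z) (br x y)) = 0)"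

definition graded_subspace :: "('k::field \<Rightarrow> 'v::ab_group_add \<Rightarrow> 'v) \<Rightarrow> ('g::ab_group_add \<Rightarrow> 'v set) \<Rightarrow> 'v set \<Rightarrow> bool" where
  "graded_subspace sm Lg A \<longleftrightarrow> module.subspace sm A
     \<and> (\<forall>v\<in>A. \<exists>S c. finite S \<and> (\<forall>g\<in>S. c g \<in> A \<inter> Lg g) \<and> v = sum c S)"

definition subalgebra where
  "subalgebra sm Lg br \<phi> A \<longleftrightarrow> graded_subspace sm Lg A
     \<and> (\<forall>x\<in>A. \<forall>y\<in>A. br x y \<in> A) \<and> \<phi> ` A = A"

definition abelian :: "('v \<Rightarrow> 'v \<Rightarrow> 'v::ab_group_add) \<Rightarrow> 'v set \<Rightarrow> bool" where
  "abelian br A \<longleftrightarrow> (\<forall>x\<in>A. \<forall>y\<in>A. br x y = 0)"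

definition max_abelian_graded_subalgebra where
  "max_abelian_graded_subalgebra sm Lg br \<phi> H \<longleftrightarrow>
     subalgebra sm Lg br \<phi> H \<and> abelian br H
     \<and> (\<forall>A. subalgebra sm Lg br \<phi> A \<and> abelian br A \<and> H \<subseteq> A \<longrightarrow> A = H)"

definition Hzero :: "('g::ab_group_add \<Rightarrow> 'v set) \<Rightarrow> 'v set \<Rightarrow> 'v set" where
  "Hzero Lg H = H \<inter> Lg 0"

definition dual_form :: "('k::field \<Rightarrow> 'v::ab_group_add \<Rightarrow> 'v) \<Rightarrow> 'v set \<Rightarrow> ('v \<Rightarrow> 'k) \<Rightarrow> bool" where
  "dual_form sm H0 \<alpha> \<longleftrightarrow> (\<forall>x\<in>H0. \<forall>y\<in>H0. \<alpha> (x + y) = \<alpha> x + \<alpha> y)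
     \<and> (\<forall>c. \<forall>x\<in>H0. \<alpha> (sm c x) = c * \<alpha> x) \<and> (\<forall>x. x \<notin> H0 \<longrightarrow> \<alpha> x = 0)"

definition root_space where
  "root_space sm Lg br \<phi> H \<alpha> = {v. \<forall>h\<in>Hzero Lg H. br h v = sm (\<alpha> h) (\<phi> v)}"

definition roots where
  "roots sm Lg br \<phi> H = {\<alpha>. dual_form sm (Hzero Lg H) \<alpha> \<and> \<alpha> \<noteq> (\<lambda>_. 0)
       \<and> root_space sm Lg br \<phi> H \<alpha> \<noteq> {0}}"

definition neg_form :: "('v \<Rightarrow> 'k::field) \<Rightarrow> 'v \<Rightarrow> 'k" where
  "neg_form \<alpha> = (\<lambda>h. - \<alpha> h)"

text \<open>alpha phi^z = alpha o (phi|_{H_0})^z, z an integer (phi bijective with phi(H_0) = H_0,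
  so (phi|_{H_0})^{-1} is the restriction of inv phi).\<close>
definition phi_pow :: "('v \<Rightarrow> 'v) \<Rightarrow> int \<Rightarrow> 'v \<Rightarrow> 'v" where
  "phi_pow \<phi> z = (if 0 \<le> z then \<phi> ^^ nat z else inv \<phi> ^^ nat (- z))"

definition rt_comp :: "('v \<Rightarrow> 'v) \<Rightarrow> 'v set \<Rightarrow> ('v \<Rightarrow> 'k::field) \<Rightarrow> int \<Rightarrow> 'v \<Rightarrow> 'k" where
  "rt_comp \<phi> H0 \<alpha> z = (\<lambda>h. if h \<in> H0 then \<alpha> (phi_pow \<phi> z h) else 0)"

text \<open>The form  a_1 phi^{-i} + a_2 phi^{-i} + a_3 phi^{-i+1} + ... + a_{i+1} phi^{-1}
  (for i = 0 this is just a_1).\<close>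
definition conn_sum :: "('v \<Rightarrow> 'v) \<Rightarrow> 'v set \<Rightarrow> (nat \<Rightarrow> 'v \<Rightarrow> 'k::field) \<Rightarrow> nat \<Rightarrow> 'v \<Rightarrow> 'k" where
  "conn_sum \<phi> H0 a i = (\<lambda>h. rt_comp \<phi> H0 (a 1) (- int i) h
      + (\<Sum>j\<in>{2..i+1}. rt_comp \<phi> H0 (a j) (- (int i + 2 - int j)) h))"

definition connected where
  "connected sm Lg br \<phi> H \<alpha> \<beta> \<longleftrightarrow>
    (let \<Lambda> = roots sm Lg br \<phi> H; H0 = Hzero Lg H in
     \<exists>k::nat. \<exists>a. 1 \<le> k \<and> (\<forall>j\<in>{1..k}. a j \<in> \<Lambda>)
       \<and> (\<exists>n::nat. a 1 = rt_comp \<phi> H0 \<alpha> (- int n))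
       \<and> (\<forall>i\<in>{1..k-2}. conn_sum \<phi> H0 a i \<in> \<Lambda>)
       \<and> (\<exists>m::nat. (if k = 1 then a 1 else conn_sum \<phi> H0 a (k - 1))
                     \<in> {rt_comp \<phi> H0 \<beta> (- int m), neg_form (rt_comp \<phi> H0 \<beta> (- int m))}))"

definition conn_class where
  "conn_class sm Lg br \<phi> H \<alpha> = {\<beta> \<in> roots sm Lg br \<phi> H. connected sm Lg br \<phi> H \<beta> \<alpha>}"

definition H_class where
  "H_class sm Lg br \<phi> H \<alpha> = module.span sm
     (\<Union>\<beta>\<in>conn_class sm Lg br \<phi> H \<alpha>.
        {br x y | x y. x \<in> root_space sm Lg br \<phi> H \<beta> \<and> y \<in> root_space sm Lg br \<phi> H (neg_form \<beta>)})"

definition V_class where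
  "V_class sm Lg br \<phi> H \<alpha> = module.span sm (\<Union>\<beta>\<in>conn_class sm Lg br \<phi> H \<alpha>. root_space sm Lg br \<phi> H \<beta>)"

definition L_class where
  "L_class sm Lg br \<phi> H \<alpha> = {h + v | h v. h \<in> H_class sm Lg br \<phi> H \<alpha> \<and> v \<in> V_class sm Lg br \<phi> H \<alpha>}"

definition is_split where
  "is_split sm Lg br \<phi> H \<longleftrightarrow>
    (let \<Lambda> = roots sm Lg br \<phi> H in
     (\<forall>v. \<exists>h\<in>H. \<exists>S f. finite S \<and> S \<subseteq> \<Lambda> \<and> (\<forall>\<alpha>\<in>S. f \<alpha> \<in> root_space sm Lg br \<phi> H \<alpha>)
              \<and> v = h + sum f S)
     \<and> (\<forall>h\<in>H. \<forall>S f. finite S \<longrightarrow> S \<subseteq> \<Lambda> \<longrightarrow> (\<forall>\<alpha>\<in>S. f \<alpha> \<in> root_space sm Lg br \<phi> H \<alpha>)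
              \<longrightarrow> h + sum f S = 0 \<longrightarrow> h = 0 \<and> (\<forall>\<alpha>\<in>S. f \<alpha> = 0)))"

definition symmetric_roots where
  "symmetric_roots sm Lg br \<phi> H \<longleftrightarrow>
     (\<forall>\<alpha>\<in>roots sm Lg br \<phi> H. neg_form \<alpha> \<in> roots sm Lg br \<phi> H)"

end

theory Submission
  imports Defs
begin


locale HL =
  fixes sm :: "'k::field \<Rightarrow> 'v::ab_group_add \<Rightarrow> 'v"
    and Lg :: "'g::ab_group_add \<Rightarrow> 'v set"
    and br :: "'v \<Rightarrow> 'v \<Rightarrow> 'v"
    and \<phi> :: "'v \<Rightarrow> 'v"
    and \<epsilon> :: "'g \<Rightarrow> 'g \<Rightarrow> 'k"
    and H :: "'v set"
  assumes hlc: "hom_lie_color sm Lg br \<phi> \<epsilon>"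
    and bijp: "bij \<phi>"
    and mas: "max_abelian_graded_subalgebra sm Lg br \<phi> H"
    and spl: "is_split sm Lg br \<phi> H"
    and symr: "symmetric_roots sm Lg br \<phi> H"
begin

lemma vs: "vector_space sm" using hlc unfolding hom_lie_color_def graded_space_def by blast

sublocale vector_space sm by (rule vs)

abbreviation "H0 \<equiv> Hzero Lg H"
abbreviation "\<Lambda> \<equiv> roots sm Lg br \<phi> H"
abbreviation "Lr \<equiv> root_space sm Lg br \<phi> H"
abbreviation "\<psi> \<equiv> inv \<phi>"
definition "R \<gamma> n = rt_comp \<phi> H0 \<gamma> (- int n)"

lemma linD: "Vector_Spaces.linear sm sm f \<Longrightarrow> f (x + y) = f x + f y \<and> f (sm c x) = sm c (f x)"
  unfolding Vector_Spaces.linear_iff by blast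

lemma lin_sum: assumes "Vector_Spaces.linear sm sm f" shows "f (sum g A) = (\<Sum>a\<in>A. f (g a))"
proof -
  interpret Vector_Spaces.linear sm sm f by fact
  show ?thesis by (rule sum)
qed

lemma lin_zero: assumes "Vector_Spaces.linear sm sm f" shows "f 0 = 0"
proof -
  interpret Vector_Spaces.linear sm sm f by fact
  show ?thesis by simp
qed

lemma lin_neg: assumes "Vector_Spaces.linear sm sm f" shows "f (- x) = - f x"
proof -
  interpret Vector_Spaces.linear sm sm f by fact
  show ?thesis by (rule neg)
qed

lemma lin_diff: assumes "Vector_Spaces.linear sm sm f" shows "f (x - y) = f x - f y"
proof -
  interpret Vector_Spaces.linear sm sm f by fact
  show ?thesis by (rule diff)
qed

lemma linphi: "Vector_Spaces.linear sm sm \<phi>" using hlc unfolding hom_lie_color_def by (elim conjE) assumption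
lemma linbr1': "\<forall>x. Vector_Spaces.linear sm sm (br x)" using hlc unfolding hom_lie_color_def by (elim conjE) assumption
lemma linbr2': "\<forall>y. Vector_Spaces.linear sm sm (\<lambda>x. br x y)" using hlc unfolding hom_lie_color_def by (elim conjE) assumption
lemma linbr1: "Vector_Spaces.linear sm sm (br x)" using linbr1' by blast
lemma linbr2: "Vector_Spaces.linear sm sm (\<lambda>x. br x y)" using linbr2' by blast
lemma phi_br': "\<forall>x y. \<phi> (br x y) = br (\<phi> x) (\<phi> y)" using hlc unfolding hom_lie_color_def by (elim conjE) assumption
lemma grLg': "\<forall>g h x y. x \<in> Lg g \<longrightarrow> y \<in> Lg h \<longrightarrow> br x y \<in> Lg (g + h)" using hlc unfolding hom_lie_color_def by (elim conjE) assumption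
lemma phiLg': "\<forall>g. \<phi> ` Lg g \<subseteq> Lg g" using hlc unfolding hom_lie_color_def by (elim conjE) assumption
lemma skew': "\<forall>a b x y. x \<in> Lg a \<longrightarrow> y \<in> Lg b \<longrightarrow> br x y = - sm (\<epsilon> a b) (br y x)" using hlc unfolding hom_lie_color_def by (elim conjE) assumption
lemma jac': "\<forall>a b c x y z. x \<in> Lg a \<longrightarrow> y \<in> Lg b \<longrightarrow> z \<in> Lg c \<longrightarrow>
          sm (\<epsilon> c a) (br (\<phi> x) (br y z)) + sm (\<epsilon> a b) (br (\<phi> y) (br z x))
          + sm (\<epsilon> b c) (br (\<phi> z) (br x y)) = 0" using hlc unfolding hom_lie_color_def by (elim conjE) assumption
lemma bich: "bichar \<epsilon>" using hlc unfolding hom_lie_color_def by (elim conjE) assumption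
lemma gs: "graded_space sm Lg" using hlc unfolding hom_lie_color_def by (elim conjE) assumption

lemma br_add1: "br (x + y) z = br x z + br y z" using linD[OF linbr2] by blast
lemma br_add2: "br z (x + y) = br z x + br z y" using linD[OF linbr1] by blast
lemma br_sc1: "br (sm c x) z = sm c (br x z)" using linD[OF linbr2] by blast
lemma br_sc2: "br z (sm c x) = sm c (br z x)" using linD[OF linbr1] by blast
lemma br_01: "br 0 z = 0" by (rule lin_zero[OF linbr2])
lemma br_02: "br z 0 = 0" by (rule lin_zero[OF linbr1])
lemma br_neg2: "br z (- x) = - br z x" by (rule lin_neg[OF linbr1])
lemma br_sum1: "br (sum g A) z = (\<Sum>a\<in>A. br (g a) z)" by (rule lin_sum[OF linbr2])
lemma br_sum2: "br z (sum g A) = (\<Sum>a\<in>A. br z (g a))" by (rule lin_sum[OF linbr1])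
lemma phi_add: "\<phi> (x + y) = \<phi> x + \<phi> y" using linD[OF linphi] by blast
lemma phi_sc: "\<phi> (sm c x) = sm c (\<phi> x)" using linD[OF linphi] by blast
lemma phi_0: "\<phi> 0 = 0" by (rule lin_zero[OF linphi])
lemma phi_sum: "\<phi> (sum g A) = (\<Sum>a\<in>A. \<phi> (g a))" by (rule lin_sum[OF linphi])
lemma phi_br: "\<phi> (br x y) = br (\<phi> x) (\<phi> y)" using phi_br' by blast

lemma linpsi: "Vector_Spaces.linear sm sm \<psi>"
  using bij_module_hom_imp_inv_module_hom[OF _ bijp] linphi module_hom_iff_linear by blast
lemma psi_add: "\<psi> (x + y) = \<psi> x + \<psi> y" using linD[OF linpsi] by blast
lemma psi_sc: "\<psi> (sm c x) = sm c (\<psi> x)" using linD[OF linpsi] by blast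
lemma phi_psi[simp]: "\<phi> (\<psi> x) = x" using bijp by (simp add: bij_is_surj surj_f_inv_f)
lemma psi_phi[simp]: "\<psi> (\<phi> x) = x" using bijp by (simp add: bij_is_inj inv_f_f)
lemma phi_inj: "\<phi> x = \<phi> y \<Longrightarrow> x = y" using bijp by (metis psi_phi)
lemma phi_eq0: "\<phi> x = 0 \<longleftrightarrow> x = 0" using phi_inj phi_0 by metis

lemma psi_br: "\<psi> (br x y) = br (\<psi> x) (\<psi> y)"
  by (metis phi_br phi_psi psi_phi)

lemma grLg: "x \<in> Lg a \<Longrightarrow> y \<in> Lg b \<Longrightarrow> br x y \<in> Lg (a + b)"
  using grLg' by blast
lemma phiLg: "x \<in> Lg a \<Longrightarrow> \<phi> x \<in> Lg a"
  using phiLg' by blast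
lemma skew: "x \<in> Lg a \<Longrightarrow> y \<in> Lg b \<Longrightarrow> br x y = - sm (\<epsilon> a b) (br y x)"
  using skew' by blast
lemma jac: "x \<in> Lg a \<Longrightarrow> y \<in> Lg b \<Longrightarrow> z \<in> Lg c \<Longrightarrow>
          sm (\<epsilon> c a) (br (\<phi> x) (br y z)) + sm (\<epsilon> a b) (br (\<phi> y) (br z x))
          + sm (\<epsilon> b c) (br (\<phi> z) (br x y)) = 0"
  using jac' by blast
lemma eps_inv: "\<epsilon> a b * \<epsilon> b a = 1" using bich unfolding bichar_def by blast
lemma eps_0: "\<epsilon> a 0 = 1"
proof -
  have "\<epsilon> a (0 + 0) = \<epsilon> a 0 * \<epsilon> a 0" using bich unfolding bichar_def by blast
  moreover have "\<epsilon> a 0 \<noteq> 0" using bich unfolding bichar_def by blast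
  ultimately show ?thesis by simp
qed
lemma eps_0l: "\<epsilon> 0 a = 1" using eps_inv[of 0 a] eps_0[of a] by simp

lemma Lg_sub: "subspace (Lg g)" using gs unfolding graded_space_def by blast
lemma decomp: "\<exists>S c. finite S \<and> (\<forall>g\<in>S. c g \<in> Lg g) \<and> v = sum c S"
  using gs unfolding graded_space_def by blast
lemma uniq: "finite S \<Longrightarrow> (\<forall>g\<in>S. c g \<in> Lg g) \<Longrightarrow> sum c S = 0 \<Longrightarrow> g \<in> S \<Longrightarrow> c g = 0"
  using gs unfolding graded_space_def by blast

lemma sub_H: "subalgebra sm Lg br \<phi> H" using mas unfolding max_abelian_graded_subalgebra_def by blast
lemma ab_H: "x \<in> H \<Longrightarrow> y \<in> H \<Longrightarrow> br x y = 0"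
  using mas unfolding max_abelian_graded_subalgebra_def abelian_def by blast
lemma H_sub: "subspace H" using sub_H unfolding subalgebra_def graded_subspace_def by blast
lemma phiH: "\<phi> ` H = H" using sub_H unfolding subalgebra_def by blast
lemma phi_H: "x \<in> H \<Longrightarrow> \<phi> x \<in> H" using phiH by blast
lemma psi_H: "x \<in> H \<Longrightarrow> \<psi> x \<in> H" using phiH by (metis imageE psi_phi)

lemma decomp0: "\<exists>S c. finite S \<and> 0 \<in> S \<and> (\<forall>g\<in>S. c g \<in> Lg g) \<and> v = sum c S"
proof -
  obtain S c where S: "finite S" "\<forall>g\<in>S. c g \<in> Lg g" "v = sum c S" using decomp by blast
  define c' where "c' g = (if g \<in> S then c g else 0)" for g
  have "v = sum c' (insert 0 S)"
  proof -
    have "insert 0 S \<inter> S = S" by blast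
    then show ?thesis using S(1,3) by (simp add: c'_def sum.If_cases)
  qed
  moreover have "\<forall>g\<in>insert 0 S. c' g \<in> Lg g" using S(2) subspace_0[OF Lg_sub] by (auto simp: c'_def)
  ultimately show ?thesis using S(1) by blast
qed

lemma psi_Lg0: assumes x: "x \<in> Lg 0" shows "\<psi> x \<in> Lg 0"
proof -
  obtain S c where S: "finite S" "0 \<in> S" "\<forall>g\<in>S. c g \<in> Lg g" "\<psi> x = sum c S" using decomp0 by blast
  define d where "d g = \<phi> (c g) - (if g = 0 then x else 0)" for g
  have xs: "x = sum (\<lambda>g. \<phi> (c g)) S" using S(4) phi_sum by (metis phi_psi)
  have dL: "\<forall>g\<in>S. d g \<in> Lg g"
    using S(3) x phiLg unfolding d_def
    by (auto intro!: subspace_diff[OF Lg_sub] subspace_0[OF Lg_sub])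
  have "sum d S = sum (\<lambda>g. \<phi> (c g)) S - sum (\<lambda>g. if g = 0 then x else 0) S"
    unfolding d_def by (rule sum_subtractf)
  also have "sum (\<lambda>g. if g = 0 then x else 0) S = x" using S(1,2) by (simp add: sum.delta)
  finally have "sum d S = 0" using xs by simp
  then have d0: "\<And>g. g \<in> S \<Longrightarrow> d g = 0" using uniq[OF S(1) dL] by blast
  have "c g = 0" if g: "g \<in> S - {0}" for g
  proof -
    have "d g = 0" using d0 g by blast
    then have "\<phi> (c g) = 0" using g unfolding d_def by simp
    then show ?thesis by (simp add: phi_eq0)
  qed
  then have "\<psi> x = sum c (S \<inter> {0})" using S(1,4)
    by (intro trans[OF S(4) sum.mono_neutral_right]) auto
  also have "\<dots> \<in> Lg 0" using S(3) by (intro subspace_sum[OF Lg_sub]) auto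
  finally show ?thesis .
qed

end


context HL begin

lemma H0_def': "h \<in> H0 \<longleftrightarrow> h \<in> H \<and> h \<in> Lg 0" unfolding Hzero_def by blast
lemma psi_H0: "h \<in> H0 \<Longrightarrow> \<psi> h \<in> H0" using H0_def' psi_H psi_Lg0 by blast
lemma phi_H0: "h \<in> H0 \<Longrightarrow> \<phi> h \<in> H0" using H0_def' phi_H phiLg by blast
lemma psin_H0: "h \<in> H0 \<Longrightarrow> (\<psi> ^^ n) h \<in> H0" by (induction n) (auto simp: psi_H0)
lemma phin_H0: "h \<in> H0 \<Longrightarrow> (\<phi> ^^ n) h \<in> H0" by (induction n) (auto simp: phi_H0)
lemma psin_phin: "(\<psi> ^^ n) ((\<phi> ^^ n) h) = h"
proof (induction n arbitrary: h)
  case (Suc n)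
  have "(\<psi> ^^ Suc n) = (\<psi> ^^ n) \<circ> \<psi>" by (rule funpow_Suc_right)
  then show ?case using Suc by simp
qed simp

lemma phi_pow_neg: "phi_pow \<phi> (- int n) = \<psi> ^^ n"
  unfolding phi_pow_def by auto

lemma Rdef: "R \<gamma> n h = (if h \<in> H0 then \<gamma> ((\<psi> ^^ n) h) else 0)"
  unfolding R_def rt_comp_def phi_pow_neg by simp

definition Z :: "('v \<Rightarrow> 'k) \<Rightarrow> bool" where "Z \<gamma> \<longleftrightarrow> (\<forall>h. h \<notin> H0 \<longrightarrow> \<gamma> h = 0)"

lemma R_R: "R (R \<gamma> n) m = R \<gamma> (n + m)"
  by (rule ext) (simp add: Rdef psin_H0 funpow_add)

lemma R_0: "Z \<gamma> \<Longrightarrow> R \<gamma> 0 = \<gamma>"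
  by (rule ext) (auto simp: Rdef Z_def)

lemma Z_R: "Z (R \<gamma> n)" by (simp add: Z_def Rdef)

lemma R_add: "R (\<lambda>h. \<gamma> h + \<delta> h) n = (\<lambda>h. R \<gamma> n h + R \<delta> n h)"
  by (rule ext) (simp add: Rdef)

lemma R_mult: "R (\<lambda>h. e * \<gamma> h) n = (\<lambda>h. e * R \<gamma> n h)"
  by (rule ext) (simp add: Rdef)

lemma R_negf: "R (neg_form \<gamma>) n = neg_form (R \<gamma> n)"
  by (rule ext) (simp add: Rdef neg_form_def)

lemma Z_add: "Z \<gamma> \<Longrightarrow> Z \<delta> \<Longrightarrow> Z (\<lambda>h. \<gamma> h + \<delta> h)" by (simp add: Z_def)
lemma Z_mult: "Z \<gamma> \<Longrightarrow> Z (\<lambda>h. e * \<gamma> h)" by (simp add: Z_def)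

lemma dual_Z: "dual_form sm H0 \<gamma> \<Longrightarrow> Z \<gamma>" unfolding dual_form_def Z_def by blast

lemma root_dual: "\<gamma> \<in> \<Lambda> \<Longrightarrow> dual_form sm H0 \<gamma>" unfolding roots_def by blast
lemma root_Z: "\<gamma> \<in> \<Lambda> \<Longrightarrow> Z \<gamma>" using root_dual dual_Z by blast

lemma psin_add: "(\<psi> ^^ n) (x + y) = (\<psi> ^^ n) x + (\<psi> ^^ n) y"
  by (induction n) (simp_all add: psi_add)
lemma psin_sc: "(\<psi> ^^ n) (sm c x) = sm c ((\<psi> ^^ n) x)"
  by (induction n) (simp_all add: psi_sc)

lemma H0_sub: "subspace H0"
  unfolding Hzero_def by (rule subspace_inter[OF H_sub Lg_sub])

lemma dual_R: assumes "dual_form sm H0 \<gamma>" shows "dual_form sm H0 (R \<gamma> n)"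
  using assms unfolding dual_form_def
  by (simp add: Rdef psin_add psin_sc psin_H0 subspace_add[OF H0_sub] subspace_scale[OF H0_sub])

lemma dual_add: "dual_form sm H0 \<gamma> \<Longrightarrow> dual_form sm H0 \<delta> \<Longrightarrow> dual_form sm H0 (\<lambda>h. \<gamma> h + \<delta> h)"
  unfolding dual_form_def by (simp add: algebra_simps)

lemma dual_mult: "dual_form sm H0 \<gamma> \<Longrightarrow> dual_form sm H0 (\<lambda>h. e * \<gamma> h)"
  unfolding dual_form_def by (simp add: algebra_simps)

lemma dual_zero: "dual_form sm H0 (\<lambda>_. 0)"
  unfolding dual_form_def by simp

lemma rs_iff: "x \<in> Lr \<gamma> \<longleftrightarrow> (\<forall>h\<in>H0. br h x = sm (\<gamma> h) (\<phi> x))"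
  unfolding root_space_def by simp

lemma rs_sub: "subspace (Lr \<gamma>)"
  unfolding subspace_def
proof (intro conjI ballI allI)
  show "0 \<in> Lr \<gamma>" unfolding rs_iff by (simp add: br_02 phi_0)
next
  fix x y assume "x \<in> Lr \<gamma>" "y \<in> Lr \<gamma>"
  then show "x + y \<in> Lr \<gamma>" unfolding rs_iff by (simp add: br_add2 phi_add scale_right_distrib)
next
  fix c x assume "x \<in> Lr \<gamma>"
  then show "sm c x \<in> Lr \<gamma>" unfolding rs_iff by (simp add: br_sc2 phi_sc mult.commute)
qed

end


context HL begin

lemma H0_Lg0: "h \<in> H0 \<Longrightarrow> h \<in> Lg 0" using H0_def' by blast
lemma H0_H: "h \<in> H0 \<Longrightarrow> h \<in> H" using H0_def' by blast

lemma rs_hom: assumes x: "x \<in> Lr \<beta>"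
  shows "\<exists>S c. finite S \<and> (\<forall>g\<in>S. c g \<in> Lr \<beta> \<and> c g \<in> Lg g) \<and> x = sum c S"
proof -
  obtain S c where S: "finite S" "\<forall>g\<in>S. c g \<in> Lg g" "x = sum c S" using decomp by blast
  have "c g \<in> Lr \<beta>" if g: "g \<in> S" for g
    unfolding rs_iff
  proof
    fix h assume h: "h \<in> H0"
    define d where "d g = br h (c g) - sm (\<beta> h) (\<phi> (c g))" for g
    have dL: "\<forall>g\<in>S. d g \<in> Lg g"
    proof
      fix g assume "g \<in> S"
      then have "c g \<in> Lg g" using S by blast
      then have "br h (c g) \<in> Lg g" "\<phi> (c g) \<in> Lg g" using grLg[OF H0_Lg0[OF h]] phiLg by force+
      then show "d g \<in> Lg g" unfolding d_def
        by (intro subspace_diff[OF Lg_sub] subspace_scale[OF Lg_sub])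
    qed
    have "sum d S = br h x - sm (\<beta> h) (\<phi> x)"
      unfolding d_def sum_subtractf S(3) br_sum2 phi_sum scale_sum_right ..
    also have "\<dots> = 0" using x h unfolding rs_iff by simp
    finally have "d g = 0" using uniq[OF S(1) dL] g by blast
    then show "br h (c g) = sm (\<beta> h) (\<phi> (c g))" unfolding d_def by simp
  qed
  then show ?thesis using S by blast
qed

lemma R1: "h \<in> H0 \<Longrightarrow> R \<gamma> 1 h = \<gamma> (\<psi> h)" by (simp add: Rdef)
lemma R1': "h \<in> H0 \<Longrightarrow> R \<gamma> (Suc 0) h = \<gamma> (\<psi> h)" by (simp add: Rdef)

lemma br_hom: assumes x: "x \<in> Lr \<beta>" "x \<in> Lg a" and y: "y \<in> Lr \<gamma>" "y \<in> Lg b"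
  shows "br x y \<in> Lr (\<lambda>h. R \<beta> 1 h + R \<gamma> 1 h)"
  unfolding rs_iff
proof
  fix h assume h: "h \<in> H0"
  define h' where "h' = \<psi> h"
  have h': "h' \<in> H0" "h' \<in> Lg 0" "\<phi> h' = h" using psi_H0[OF h] H0_Lg0 unfolding h'_def by auto
  have J: "sm (\<epsilon> b 0) (br (\<phi> h') (br x y)) + sm (\<epsilon> 0 a) (br (\<phi> x) (br y h'))
          + sm (\<epsilon> a b) (br (\<phi> y) (br h' x)) = 0"
    by (rule jac[OF h'(2) x(2) y(2)])
  have e1: "br y h' = - sm (\<gamma> h') (\<phi> y)"
    using skew[OF y(2) h'(2)] y(1) h'(1) unfolding rs_iff by (simp add: eps_0)
  have e2: "br h' x = sm (\<beta> h') (\<phi> x)" using x(1) h'(1) unfolding rs_iff by simp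
  define B where "B = br (\<phi> x) (\<phi> y)"
  have e3: "br (\<phi> y) (\<phi> x) = - sm (\<epsilon> b a) B"
    unfolding B_def by (rule skew[OF phiLg[OF y(2)] phiLg[OF x(2)]])
  have "sm (\<epsilon> a b) (br (\<phi> y) (br h' x)) = - sm (\<beta> h') B"
    unfolding e2 br_sc2 e3 using eps_inv[of a b]
    by (simp add: mult.commute mult.left_commute)
  moreover have "sm (\<epsilon> 0 a) (br (\<phi> x) (br y h')) = - sm (\<gamma> h') B"
    unfolding e1 eps_0l B_def by (simp add: br_neg2 br_sc2)
  ultimately have "br h (br x y) = sm (\<gamma> h') B + sm (\<beta> h') B"
    using J h'(3) by (simp add: eps_0 algebra_simps)
  also have "\<dots> = sm (R \<beta> 1 h + R \<gamma> 1 h) (\<phi> (br x y))"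
    unfolding R1[OF h] B_def phi_br h'_def[symmetric] by (simp add: scale_left_distrib)
  finally show "br h (br x y) = sm (R \<beta> 1 h + R \<gamma> 1 h) (\<phi> (br x y))" .
qed

lemma br_rs: assumes x: "x \<in> Lr \<beta>" and y: "y \<in> Lr \<gamma>"
  shows "br x y \<in> Lr (\<lambda>h. R \<beta> 1 h + R \<gamma> 1 h)"
proof -
  obtain S c where S: "finite S" "\<forall>g\<in>S. c g \<in> Lr \<beta> \<and> c g \<in> Lg g" "x = sum c S" using rs_hom[OF x] by blast
  obtain T d where T: "finite T" "\<forall>g\<in>T. d g \<in> Lr \<gamma> \<and> d g \<in> Lg g" "y = sum d T" using rs_hom[OF y] by blast
  have "br x y = (\<Sum>g\<in>S. \<Sum>t\<in>T. br (c g) (d t))" unfolding S(3) T(3) br_sum1 br_sum2 by (rule sum.swap)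
  also have "\<dots> \<in> Lr (\<lambda>h. R \<beta> 1 h + R \<gamma> 1 h)"
    using S(2) T(2) by (intro subspace_sum[OF rs_sub] br_hom) auto
  finally show ?thesis .
qed

lemma phi_rs: assumes x: "x \<in> Lr \<beta>" shows "\<phi> x \<in> Lr (R \<beta> 1)"
  unfolding rs_iff
proof
  fix h assume h: "h \<in> H0"
  have "br h (\<phi> x) = \<phi> (br (\<psi> h) x)" by (simp add: phi_br)
  also have "\<dots> = \<phi> (sm (\<beta> (\<psi> h)) (\<phi> x))" using x psi_H0[OF h] unfolding rs_iff by simp
  finally show "br h (\<phi> x) = sm (R \<beta> 1 h) (\<phi> (\<phi> x))" by (simp add: R1'[OF h] phi_sc)
qed

definition Pf :: "('v \<Rightarrow> 'k) \<Rightarrow> 'v \<Rightarrow> 'k" where "Pf \<beta> = (\<lambda>h. if h \<in> H0 then \<beta> (\<phi> h) else 0)"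

lemma psi_rs: assumes x: "x \<in> Lr \<beta>" shows "\<psi> x \<in> Lr (Pf \<beta>)"
  unfolding rs_iff
proof
  fix h assume h: "h \<in> H0"
  have "br h (\<psi> x) = \<psi> (br (\<phi> h) x)" by (simp add: psi_br)
  also have "\<dots> = \<psi> (sm (\<beta> (\<phi> h)) (\<phi> x))" using x phi_H0[OF h] unfolding rs_iff by simp
  finally show "br h (\<psi> x) = sm (Pf \<beta> h) (\<phi> (\<psi> x))" by (simp add: Pf_def h psi_sc)
qed

lemma R_Pf: "Z \<beta> \<Longrightarrow> R (Pf \<beta>) 1 = \<beta>"
  by (rule ext) (auto simp: Rdef Pf_def Z_def psi_H0)

lemma Pf_neg: "Pf (neg_form \<beta>) = neg_form (Pf \<beta>)"
  by (rule ext) (simp add: Pf_def neg_form_def)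

lemma dual_Pf: assumes "dual_form sm H0 \<gamma>" shows "dual_form sm H0 (Pf \<gamma>)"
  using assms unfolding dual_form_def Pf_def
  by (simp add: phi_add phi_sc phi_H0 subspace_add[OF H0_sub] subspace_scale[OF H0_sub])

lemma H_rs0: "h \<in> H \<Longrightarrow> h \<in> Lr (\<lambda>_. 0)"
  unfolding rs_iff using ab_H H0_H by simp

lemma spl1: "\<exists>h\<in>H. \<exists>S f. finite S \<and> S \<subseteq> \<Lambda> \<and> (\<forall>\<alpha>\<in>S. f \<alpha> \<in> Lr \<alpha>) \<and> v = h + sum f S"
  using spl unfolding is_split_def Let_def by blast
lemma spl2: "h \<in> H \<Longrightarrow> finite S \<Longrightarrow> S \<subseteq> \<Lambda> \<Longrightarrow> (\<forall>\<alpha>\<in>S. f \<alpha> \<in> Lr \<alpha>) \<Longrightarrow> h + sum f S = 0 \<Longrightarrow> \<alpha> \<in> S \<Longrightarrow> f \<alpha> = 0"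
  using spl unfolding is_split_def Let_def by blast

lemma root_nz: assumes "\<gamma> \<in> \<Lambda>" shows "\<exists>h\<in>H0. \<gamma> h \<noteq> 0"
proof -
  have "\<gamma> \<noteq> (\<lambda>_. 0)" using assms unfolding roots_def by blast
  then obtain h where "\<gamma> h \<noteq> 0" by auto
  then show ?thesis using root_Z[OF assms] unfolding Z_def by blast
qed

lemma rs0_H: assumes x: "x \<in> Lr (\<lambda>_. 0)" shows "x \<in> H"
proof -
  obtain hh S f where S: "hh \<in> H" "finite S" "S \<subseteq> \<Lambda>" "\<forall>\<alpha>\<in>S. f \<alpha> \<in> Lr \<alpha>" "x = hh + sum f S"
    using spl1 by blast
  have "f \<gamma> = 0" if g: "\<gamma> \<in> S" for \<gamma>
  proof -
    obtain h0 where h0: "h0 \<in> H0" "\<gamma> h0 \<noteq> 0" using root_nz g S(3) by blast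
    have "0 = br h0 x" using x h0 unfolding rs_iff by simp
    also have "\<dots> = (\<Sum>a\<in>S. sm (a h0) (\<phi> (f a)))"
      unfolding S(5) br_add2 br_sum2 using ab_H[OF H0_H[OF h0(1)] S(1)] S(4) h0(1)
      unfolding rs_iff by simp
    also have "\<dots> = \<phi> (\<Sum>a\<in>S. sm (a h0) (f a))" by (simp add: phi_sum phi_sc)
    finally have "(\<Sum>a\<in>S. sm (a h0) (f a)) = 0" using phi_eq0 by metis
    then have "0 + (\<Sum>a\<in>S. sm (a h0) (f a)) = 0" by simp
    from spl2[OF subspace_0[OF H_sub] S(2,3) _ this g]
    have "sm (\<gamma> h0) (f \<gamma>) = 0" using S(4) subspace_scale[OF rs_sub] by blast
    then show ?thesis using h0(2) by simp
  qed
  then have "x = hh" using S(5) by simp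
  then show ?thesis using S(1) by simp
qed

lemma rs_nz: "\<gamma> \<in> \<Lambda> \<Longrightarrow> \<exists>x\<in>Lr \<gamma>. x \<noteq> 0"
  unfolding roots_def using subspace_0[OF rs_sub] by blast

lemma rootI: "dual_form sm H0 \<gamma> \<Longrightarrow> h \<in> H0 \<Longrightarrow> \<gamma> h \<noteq> 0 \<Longrightarrow> x \<in> Lr \<gamma> \<Longrightarrow> x \<noteq> 0 \<Longrightarrow> \<gamma> \<in> \<Lambda>"
  unfolding roots_def by auto

lemma root_R1: assumes g: "\<gamma> \<in> \<Lambda>" shows "R \<gamma> 1 \<in> \<Lambda>"
proof -
  obtain h where h: "h \<in> H0" "\<gamma> h \<noteq> 0" using root_nz[OF g] by blast
  obtain x where x: "x \<in> Lr \<gamma>" "x \<noteq> 0" using rs_nz[OF g] by blast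
  show ?thesis
  proof (rule rootI[OF dual_R[OF root_dual[OF g]] phi_H0[OF h(1)] _ phi_rs[OF x(1)]])
    show "R \<gamma> 1 (\<phi> h) \<noteq> 0" using h by (simp add: R1' phi_H0)
    show "\<phi> x \<noteq> 0" using x(2) phi_eq0 by simp
  qed
qed

lemma root_R: assumes g: "\<gamma> \<in> \<Lambda>" shows "R \<gamma> n \<in> \<Lambda>"
proof (induction n)
  case 0 then show ?case using R_0[OF root_Z[OF g]] g by simp
next
  case (Suc n)
  have "R \<gamma> (Suc n) = R (R \<gamma> n) 1" using R_R[of \<gamma> n 1] by simp
  then show ?case using root_R1[OF Suc] by simp
qed

lemma root_Pf: assumes g: "\<gamma> \<in> \<Lambda>" shows "Pf \<gamma> \<in> \<Lambda>"
proof -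
  obtain h where h: "h \<in> H0" "\<gamma> h \<noteq> 0" using root_nz[OF g] by blast
  obtain x where x: "x \<in> Lr \<gamma>" "x \<noteq> 0" using rs_nz[OF g] by blast
  show ?thesis
  proof (rule rootI[OF dual_Pf[OF root_dual[OF g]] psi_H0[OF h(1)] _ psi_rs[OF x(1)]])
    show "Pf \<gamma> (\<psi> h) \<noteq> 0" using h by (simp add: Pf_def psi_H0)
    show "\<psi> x \<noteq> 0" using x(2) by (metis phi_psi phi_0)
  qed
qed

lemma root_neg: "\<gamma> \<in> \<Lambda> \<Longrightarrow> neg_form \<gamma> \<in> \<Lambda>"
  using symr unfolding symmetric_roots_def by blast

lemma root_mult: "\<gamma> \<in> \<Lambda> \<Longrightarrow> e = 1 \<or> e = -1 \<Longrightarrow> (\<lambda>h. e * \<gamma> h) \<in> \<Lambda>"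
  using root_neg[of \<gamma>] unfolding neg_form_def by auto

lemma nonroot: "dual_form sm H0 \<delta> \<Longrightarrow> \<delta> \<noteq> (\<lambda>_. 0) \<Longrightarrow> \<delta> \<notin> \<Lambda> \<Longrightarrow> x \<in> Lr \<delta> \<Longrightarrow> x = 0"
  unfolding roots_def using subspace_0[OF rs_sub] by blast

end


context HL begin

primrec cs :: "(nat \<Rightarrow> 'v \<Rightarrow> 'k) \<Rightarrow> nat \<Rightarrow> 'v \<Rightarrow> 'k" where
  "cs a 0 = a 1"
| "cs a (Suc i) = (\<lambda>h. R (cs a i) 1 h + R (a (i + 2)) 1 h)"

lemma Rpsi: "h \<in> H0 \<Longrightarrow> R \<gamma> n (\<psi> h) = R \<gamma> (Suc n) h"
proof -
  assume h: "h \<in> H0"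
  have "(\<psi> ^^ Suc n) = (\<psi> ^^ n) \<circ> \<psi>" by (rule funpow_Suc_right)
  then show ?thesis using h psi_H0[OF h] by (simp add: Rdef)
qed

lemma conn_sum_R: "conn_sum \<phi> H0 a i = (\<lambda>h. R (a 1) i h + (\<Sum>j\<in>{2..i+1}. R (a j) (i + 2 - j) h))"
proof (rule ext)
  fix h
  have "(\<Sum>j\<in>{2..i+1}. rt_comp \<phi> H0 (a j) (- (int i + 2 - int j)) h) = (\<Sum>j\<in>{2..i+1}. R (a j) (i + 2 - j) h)"
  proof (rule sum.cong[OF refl])
    fix j assume "j \<in> {2..i+1}"
    then have "- (int i + 2 - int j) = - int (i + 2 - j)" by auto
    then show "rt_comp \<phi> H0 (a j) (- (int i + 2 - int j)) h = R (a j) (i + 2 - j) h" by (simp add: R_def)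
  qed
  then show "conn_sum \<phi> H0 a i h = R (a 1) i h + (\<Sum>j\<in>{2..i+1}. R (a j) (i + 2 - j) h)"
    unfolding conn_sum_def by (simp add: R_def)
qed

lemma conn_sum_rec: "conn_sum \<phi> H0 a (Suc i) = (\<lambda>h. R (conn_sum \<phi> H0 a i) 1 h + R (a (i + 2)) 1 h)"
proof (rule ext)
  fix h
  show "conn_sum \<phi> H0 a (Suc i) h = R (conn_sum \<phi> H0 a i) 1 h + R (a (i + 2)) 1 h"
  proof (cases "h \<in> H0")
    case False then show ?thesis unfolding conn_sum_R by (simp add: Rdef)
  next
    case True
    have "R (conn_sum \<phi> H0 a i) 1 h = conn_sum \<phi> H0 a i (\<psi> h)" using True by (simp add: R1')
    also have "\<dots> = R (a 1) (Suc i) h + (\<Sum>j\<in>{2..i+1}. R (a j) (Suc (i + 2 - j)) h)"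
      unfolding conn_sum_R using True by (simp add: Rpsi)
    also have "(\<Sum>j\<in>{2..i+1}. R (a j) (Suc (i + 2 - j)) h) = (\<Sum>j\<in>{2..i+1}. R (a j) (Suc i + 2 - j) h)"
    proof (rule sum.cong[OF refl])
      fix j assume "j \<in> {2..i+1}"
      then have "Suc (i + 2 - j) = Suc i + 2 - j" by auto
      then show "R (a j) (Suc (i + 2 - j)) h = R (a j) (Suc i + 2 - j) h" by simp
    qed
    finally have A: "R (conn_sum \<phi> H0 a i) 1 h = R (a 1) (Suc i) h + (\<Sum>j\<in>{2..i+1}. R (a j) (Suc i + 2 - j) h)" .
    have "conn_sum \<phi> H0 a (Suc i) h = R (a 1) (Suc i) h + (\<Sum>j\<in>{2..Suc (i+1)}. R (a j) (Suc i + 2 - j) h)"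
      unfolding conn_sum_R by simp
    also have "(\<Sum>j\<in>{2..Suc (i+1)}. R (a j) (Suc i + 2 - j) h) = (\<Sum>j\<in>{2..i+1}. R (a j) (Suc i + 2 - j) h) + R (a (i+2)) 1 h"
      by (simp add: sum.cl_ivl_Suc)
    finally show ?thesis using A by simp
  qed
qed

lemma cs_conn_sum: "Z (a 1) \<Longrightarrow> conn_sum \<phi> H0 a i = cs a i"
proof (induction i)
  case 0
  then show ?case unfolding conn_sum_R using R_0 by simp
next
  case (Suc i)
  then show ?case unfolding conn_sum_rec by simp
qed

definition conn2 where
  "conn2 \<alpha> \<beta> \<longleftrightarrow> (\<exists>k a. 1 \<le> k \<and> (\<forall>j\<in>{1..k}. a j \<in> \<Lambda>) \<and> (\<exists>n. a 1 = R \<alpha> n)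
      \<and> (\<forall>i<k. cs a i \<in> \<Lambda>) \<and> (\<exists>m e. (e = 1 \<or> e = (-1::'k)) \<and> cs a (k - 1) = (\<lambda>h. e * R \<beta> m h)))"

lemma conn_iff: assumes b: "\<beta> \<in> \<Lambda>" shows "connected sm Lg br \<phi> H \<alpha> \<beta> \<longleftrightarrow> conn2 \<alpha> \<beta>"
proof
  assume "connected sm Lg br \<phi> H \<alpha> \<beta>"
  then obtain k a n m where k: "1 \<le> k" and a: "\<forall>j\<in>{1..k}. a j \<in> \<Lambda>" and n: "a 1 = rt_comp \<phi> H0 \<alpha> (- int n)"
    and mid: "\<forall>i\<in>{1..k-2}. conn_sum \<phi> H0 a i \<in> \<Lambda>"
    and e: "(if k = 1 then a 1 else conn_sum \<phi> H0 a (k - 1)) \<in> {rt_comp \<phi> H0 \<beta> (- int m), neg_form (rt_comp \<phi> H0 \<beta> (- int m))}"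
    unfolding connected_def Let_def by blast
  have a1: "a 1 \<in> \<Lambda>" using a k by auto
  have Z1: "Z (a 1)" using root_Z[OF a1] .
  have end': "cs a (k - 1) \<in> {R \<beta> m, neg_form (R \<beta> m)}"
    using e cs_conn_sum[of a, OF Z1] k by (cases "k = 1") (auto simp: R_def)
  then obtain ee where ee: "ee = 1 \<or> ee = (-1::'k)" "cs a (k - 1) = (\<lambda>h. ee * R \<beta> m h)"
    unfolding neg_form_def by (metis (no_types, lifting) empty_iff insert_iff mult_1 mult_minus1)
  have csr: "cs a i \<in> \<Lambda>" if i: "i < k" for i
  proof (cases "i = 0")
    case True then show ?thesis using a1 by simp
  next
    case False
    show ?thesis
    proof (cases "i = k - 1")
      case True then show ?thesis using ee root_mult[OF root_R[OF b]] by simp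
    next
      case False
      then have "i \<in> {1..k-2}" using i \<open>i \<noteq> 0\<close> by auto
      then show ?thesis using mid cs_conn_sum[of a, OF Z1] by simp
    qed
  qed
  show "conn2 \<alpha> \<beta>" unfolding conn2_def
    using k a n csr ee by (auto simp: R_def)
next
  assume "conn2 \<alpha> \<beta>"
  then obtain k a n m ee where k: "1 \<le> k" and a: "\<forall>j\<in>{1..k}. a j \<in> \<Lambda>" and n: "a 1 = R \<alpha> n"
    and csr: "\<forall>i<k. cs a i \<in> \<Lambda>" and ee: "ee = 1 \<or> ee = (-1::'k)" "cs a (k - 1) = (\<lambda>h. ee * R \<beta> m h)"
    unfolding conn2_def by blast
  have a1: "a 1 \<in> \<Lambda>" using a k by auto
  have Z1: "Z (a 1)" using root_Z[OF a1] .
  have mid: "\<forall>i\<in>{1..k-2}. conn_sum \<phi> H0 a i \<in> \<Lambda>" using csr cs_conn_sum[of a, OF Z1] by auto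
  have "(if k = 1 then a 1 else conn_sum \<phi> H0 a (k - 1)) = cs a (k - 1)"
    using cs_conn_sum[of a, OF Z1] by auto
  also have "\<dots> \<in> {R \<beta> m, neg_form (R \<beta> m)}" using ee unfolding neg_form_def by auto
  finally have e: "(if k = 1 then a 1 else conn_sum \<phi> H0 a (k - 1)) \<in> {rt_comp \<phi> H0 \<beta> (- int m), neg_form (rt_comp \<phi> H0 \<beta> (- int m))}"
    by (simp add: R_def)
  have n': "a 1 = rt_comp \<phi> H0 \<alpha> (- int n)" using n by (simp add: R_def)
  show "connected sm Lg br \<phi> H \<alpha> \<beta>" unfolding connected_def Let_def
    apply (rule exI[of _ k], rule exI[of _ a]) using k a n' mid e by blast
qed

end


context HL begin

lemma cs_cong: "(\<And>j. 1 \<le> j \<Longrightarrow> j \<le> i + 1 \<Longrightarrow> a j = b j) \<Longrightarrow> cs a i = cs b i"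
  by (induction i) auto

lemma cs_shift: "cs (\<lambda>j. R (a j) n) i = R (cs a i) n"
  by (induction i) (simp_all add: R_R R_add add.commute)

lemma e_sq: "e = 1 \<or> e = (-1::'k) \<Longrightarrow> e * e = 1" by auto

lemma conn2_trans: assumes ab: "conn2 \<alpha> \<beta>" and bg: "conn2 \<beta> \<gamma>" shows "conn2 \<alpha> \<gamma>"
proof -
  obtain k a n m e1 where k: "1 \<le> k" and a: "\<forall>j\<in>{1..k}. a j \<in> \<Lambda>" and n: "a 1 = R \<alpha> n"
    and csa: "\<forall>i<k. cs a i \<in> \<Lambda>" and e1: "e1 = 1 \<or> e1 = (-1::'k)" "cs a (k - 1) = (\<lambda>h. e1 * R \<beta> m h)"
    using ab unfolding conn2_def by blast
  obtain p b n' m' e2 where p: "1 \<le> p" and b: "\<forall>j\<in>{1..p}. b j \<in> \<Lambda>" and n': "b 1 = R \<beta> n'"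
    and csb: "\<forall>i<p. cs b i \<in> \<Lambda>" and e2: "e2 = 1 \<or> e2 = (-1::'k)" "cs b (p - 1) = (\<lambda>h. e2 * R \<gamma> m' h)"
    using bg unfolding conn2_def by blast
  define c where "c j = (if j \<le> k then R (a j) n' else (\<lambda>h. e1 * R (b (j - k + 1)) m h))" for j
  have C1: "cs c i = R (cs a i) n'" if i: "i \<le> k - 1" for i
  proof -
    have "cs c i = cs (\<lambda>j. R (a j) n') i" by (rule cs_cong) (use i k in \<open>auto simp: c_def\<close>)
    then show ?thesis by (simp add: cs_shift)
  qed
  have C2: "cs c (k - 1 + j) = (\<lambda>h. e1 * R (cs b j) m h)" if j: "j \<le> p - 1" for j
    using j
  proof (induction j)
    case 0
    have "cs c (k - 1) = R (cs a (k - 1)) n'" using C1 by simp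
    also have "\<dots> = (\<lambda>h. e1 * R \<beta> (m + n') h)" unfolding e1(2) R_mult R_R ..
    also have "\<dots> = (\<lambda>h. e1 * R (cs b 0) m h)"
    proof -
      have "R (cs b 0) m = R \<beta> (n' + m)" using n' R_R by simp
      then show ?thesis by (simp add: add.commute)
    qed
    finally show ?case by simp
  next
    case (Suc j)
    have cj: "c (k - 1 + j + 2) = (\<lambda>h. e1 * R (b (j + 2)) m h)"
      using k unfolding c_def by auto
    have "cs c (k - 1 + Suc j) = cs c (Suc (k - 1 + j))" by simp
    also have "\<dots> = (\<lambda>h. R (cs c (k - 1 + j)) 1 h + R (c (k - 1 + j + 2)) 1 h)" by simp
    also have "\<dots> = (\<lambda>h. e1 * R (cs b j) (m + 1) h + e1 * R (b (j + 2)) (m + 1) h)"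
      unfolding cj Suc.IH[OF Suc_leD[OF Suc.prems]] R_mult R_R ..
    also have "\<dots> = (\<lambda>h. e1 * R (cs b (Suc j)) m h)"
      by (simp add: R_add R_R distrib_left)
    finally show ?case .
  qed
  define kk where "kk = k + p - 1"
  have "conn2 \<alpha> \<gamma>" unfolding conn2_def
  proof (intro exI conjI)
    show "1 \<le> kk" using k p unfolding kk_def by simp
    show "\<forall>j\<in>{1..kk}. c j \<in> \<Lambda>"
    proof
      fix j assume j: "j \<in> {1..kk}"
      show "c j \<in> \<Lambda>"
      proof (cases "j \<le> k")
        case True then show ?thesis using a j by (simp add: c_def root_R)
      next
        case False
        then have "b (j - k + 1) \<in> \<Lambda>" using b j unfolding kk_def by auto
        then show ?thesis using False e1(1) by (simp add: c_def root_mult root_R)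
      qed
    qed
    show "c 1 = R \<alpha> (n + n')" using k unfolding c_def n R_R by simp
    show "\<forall>i<kk. cs c i \<in> \<Lambda>"
    proof (intro allI impI)
      fix i assume i: "i < kk"
      show "cs c i \<in> \<Lambda>"
      proof (cases "i \<le> k - 1")
        case True then show ?thesis using C1 csa k by (simp add: root_R)
      next
        case False
        define j where "j = i - (k - 1)"
        have ij: "i = k - 1 + j" "j \<le> p - 1" "j < p" using False i unfolding j_def kk_def by auto
        show ?thesis unfolding ij(1) C2[OF ij(2)] using csb ij(3) e1(1) by (simp add: root_mult root_R)
      qed
    qed
    have "cs c (kk - 1) = cs c (k - 1 + (p - 1))" unfolding kk_def using k p by (simp add: algebra_simps)
    also have "\<dots> = (\<lambda>h. (e1 * e2) * R \<gamma> (m' + m) h)" unfolding C2[OF order_refl] e2(2) R_mult R_R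
      by (simp add: mult.assoc)
    finally show "cs c (kk - 1) = (\<lambda>h. (e1 * e2) * R \<gamma> (m' + m) h)" .
    show "e1 * e2 = 1 \<or> e1 * e2 = -1" using e1(1) e2(1) by auto
  qed
  then show ?thesis .
qed

end


context HL begin

lemma conn2_sym: assumes ab: "conn2 \<alpha> \<beta>" shows "conn2 \<beta> \<alpha>"
proof -
  obtain k a n m e where k: "1 \<le> k" and a: "\<forall>j\<in>{1..k}. a j \<in> \<Lambda>" and n: "a 1 = R \<alpha> n"
    and csa: "\<forall>i<k. cs a i \<in> \<Lambda>" and e: "e = 1 \<or> e = (-1::'k)" "cs a (k - 1) = (\<lambda>h. e * R \<beta> m h)"
    using ab unfolding conn2_def by blast
  have ee: "e * e = 1" using e_sq[OF e(1)] .
  define c where "c j = (if j = 1 then (\<lambda>h. e * cs a (k - 1) h) else (\<lambda>h. - e * R (a (k + 2 - j)) (2 * j - 3) h))" for j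
  have c1: "c 1 = R \<beta> m" unfolding c_def e(2) by (simp add: mult.assoc[symmetric] ee)
  have S: "cs c j = (\<lambda>h. e * R (cs a (k - 1 - j)) (2 * j) h)" if j: "j \<le> k - 1" for j
    using j
  proof (induction j)
    case 0
    have "Z (cs a (k - 1))" using csa k root_Z by simp
    then show ?case unfolding cs.simps using R_0 by (simp add: c_def)
  next
    case (Suc j)
    have j2: "j + 2 \<le> k" using Suc.prems by simp
    have cj: "c (j + 2) = (\<lambda>h. - e * R (a (k - j)) (2 * j + 1) h)"
      unfolding c_def using j2 by (simp add: numeral_2_eq_2 algebra_simps)
    have km: "k - 1 - j = Suc (k - 2 - j)" "k - 2 - j + 2 = k - j" "k - 1 - Suc j = k - 2 - j" using j2 by auto
    have "cs c (Suc j) = (\<lambda>h. R (cs c j) 1 h + R (c (j + 2)) 1 h)" by simp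
    also have "\<dots> = (\<lambda>h. e * R (cs a (k - 1 - j)) (2 * j + 1) h + - e * R (a (k - j)) (2 * j + 1 + 1) h)"
      unfolding cj Suc.IH[OF Suc_leD[OF Suc.prems]] R_mult R_R by simp
    also have "\<dots> = (\<lambda>h. e * R (cs a (k - 2 - j)) (2 * Suc j) h)"
    proof -
      have x: "1 + (2 * j + 1) = 2 * Suc j" "2 * j + 1 + 1 = 2 * Suc j" by simp_all
      show ?thesis unfolding km(1) cs.simps km(2) R_add R_R x by (simp add: distrib_left)
    qed
    finally show ?case unfolding km(3) .
  qed
  have "conn2 \<beta> \<alpha>" unfolding conn2_def
  proof (intro exI conjI)
    show "1 \<le> k" by fact
    show "\<forall>j\<in>{1..k}. c j \<in> \<Lambda>"
    proof
      fix j assume j: "j \<in> {1..k}"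
      show "c j \<in> \<Lambda>"
      proof (cases "j = 1")
        case True
        have "cs a (k - 1) \<in> \<Lambda>" using csa k by simp
        then show ?thesis using e(1) unfolding c_def True by (simp add: root_mult)
      next
        case False
        then have "k + 2 - j \<in> {1..k}" using j by auto
        then have "a (k + 2 - j) \<in> \<Lambda>" using a by blast
        moreover have "- e = 1 \<or> - e = -1" using e(1) by auto
        ultimately have "(\<lambda>h. - e * R (a (k + 2 - j)) (2 * j - 3) h) \<in> \<Lambda>"
          by (intro root_mult root_R)
        then show ?thesis using False unfolding c_def by simp
      qed
    qed
    show "c 1 = R \<beta> m" by (rule c1)
    show "\<forall>i<k. cs c i \<in> \<Lambda>"
    proof (intro allI impI)
      fix i assume i: "i < k"
      then have "cs a (k - 1 - i) \<in> \<Lambda>" using csa by simp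
      then show "cs c i \<in> \<Lambda>" using S[of i] i e(1) by (simp add: root_mult root_R)
    qed
    have "cs c (k - 1) = (\<lambda>h. e * R (cs a 0) (2 * (k - 1)) h)" using S[of "k - 1"] by simp
    also have "\<dots> = (\<lambda>h. e * R \<alpha> (n + 2 * (k - 1)) h)" unfolding cs.simps n R_R ..
    finally show "cs c (k - 1) = (\<lambda>h. e * R \<alpha> (n + 2 * (k - 1)) h)" .
    show "e = 1 \<or> e = -1" by fact
  qed
  then show ?thesis .
qed

end


context HL begin

abbreviation "Cl \<alpha> \<equiv> conn_class sm Lg br \<phi> H \<alpha>"

lemma Cl_iff: "\<alpha> \<in> \<Lambda> \<Longrightarrow> \<beta> \<in> Cl \<alpha> \<longleftrightarrow> \<beta> \<in> \<Lambda> \<and> conn2 \<beta> \<alpha>"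
  unfolding conn_class_def using conn_iff by blast

lemma conn2_R1: assumes b: "\<beta> \<in> \<Lambda>" shows "conn2 (R \<beta> 1) \<beta>"
  unfolding conn2_def
proof (intro exI conjI)
  let ?a = "\<lambda>_::nat. R \<beta> 1"
  show "(1::nat) \<le> 1" by simp
  show "\<forall>j\<in>{1..1}. ?a j \<in> \<Lambda>" using root_R1[OF b] by simp
  show "?a 1 = R (R \<beta> 1) 0" using R_0[OF Z_R] by simp
  show "\<forall>i<1. cs ?a i \<in> \<Lambda>" using root_R1[OF b] by simp
  show "cs ?a (1 - 1) = (\<lambda>h. 1 * R \<beta> 1 h)" by simp
  show "(1::'k) = 1 \<or> (1::'k) = -1" by simp
qed

lemma conn2_Pf: assumes b: "\<beta> \<in> \<Lambda>" shows "conn2 \<beta> (Pf \<beta>)"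
  unfolding conn2_def
proof (intro exI conjI)
  let ?a = "\<lambda>_::nat. \<beta>"
  show "(1::nat) \<le> 1" by simp
  show "\<forall>j\<in>{1..1}. ?a j \<in> \<Lambda>" using b by simp
  show "?a 1 = R \<beta> 0" using R_0[OF root_Z[OF b]] by simp
  show "\<forall>i<1. cs ?a i \<in> \<Lambda>" using b by simp
  show "cs ?a (1 - 1) = (\<lambda>h. 1 * R (Pf \<beta>) 1 h)" using R_Pf[OF root_Z[OF b]] by simp
  show "(1::'k) = 1 \<or> (1::'k) = -1" by simp
qed

lemma conn2_sum: assumes b: "\<beta> \<in> \<Lambda>" and g: "\<gamma> \<in> \<Lambda>" and d: "(\<lambda>h. R \<beta> 1 h + R \<gamma> 1 h) \<in> \<Lambda>"
  shows "conn2 \<beta> (\<lambda>h. R \<beta> 1 h + R \<gamma> 1 h)"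
  unfolding conn2_def
proof (intro exI conjI)
  let ?a = "\<lambda>j::nat. if j = 1 then \<beta> else \<gamma>"
  show "(1::nat) \<le> 2" by simp
  show "\<forall>j\<in>{1..2}. ?a j \<in> \<Lambda>" using b g by simp
  show "?a 1 = R \<beta> 0" using R_0[OF root_Z[OF b]] by simp
  show "\<forall>i<2. cs ?a i \<in> \<Lambda>" using b d by (auto simp: less_2_cases_iff)
  show "cs ?a (2 - 1) = (\<lambda>h. 1 * R (\<lambda>h. R \<beta> 1 h + R \<gamma> 1 h) 0 h)" using R_0[OF root_Z[OF d]]
    by (simp add: numeral_2_eq_2)
  show "(1::'k) = 1 \<or> (1::'k) = -1" by simp
qed

lemma cl_R1: assumes a: "\<alpha> \<in> \<Lambda>" and b: "\<beta> \<in> Cl \<alpha>" shows "R \<beta> 1 \<in> Cl \<alpha>"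
proof -
  have b': "\<beta> \<in> \<Lambda>" "conn2 \<beta> \<alpha>" using b Cl_iff[OF a] by auto
  have "conn2 (R \<beta> 1) \<alpha>" by (rule conn2_trans[OF conn2_R1[OF b'(1)] b'(2)])
  then show ?thesis using Cl_iff[OF a] root_R1[OF b'(1)] by simp
qed

lemma cl_Pf: assumes a: "\<alpha> \<in> \<Lambda>" and b: "\<beta> \<in> Cl \<alpha>" shows "Pf \<beta> \<in> Cl \<alpha>"
proof -
  have b': "\<beta> \<in> \<Lambda>" "conn2 \<beta> \<alpha>" using b Cl_iff[OF a] by auto
  have "conn2 (Pf \<beta>) \<alpha>" by (rule conn2_trans[OF conn2_sym[OF conn2_Pf[OF b'(1)]] b'(2)])
  then show ?thesis using Cl_iff[OF a] root_Pf[OF b'(1)] by simp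
qed

lemma cl_sum: assumes a: "\<alpha> \<in> \<Lambda>" and b: "\<beta> \<in> Cl \<alpha>" and g: "\<gamma> \<in> Cl \<alpha>"
  and d: "(\<lambda>h. R \<beta> 1 h + R \<gamma> 1 h) \<in> \<Lambda>"
  shows "(\<lambda>h. R \<beta> 1 h + R \<gamma> 1 h) \<in> Cl \<alpha>"
proof -
  have b': "\<beta> \<in> \<Lambda>" "conn2 \<beta> \<alpha>" using b Cl_iff[OF a] by auto
  have g': "\<gamma> \<in> \<Lambda>" using g Cl_iff[OF a] by auto
  have "conn2 (\<lambda>h. R \<beta> 1 h + R \<gamma> 1 h) \<alpha>" by (rule conn2_trans[OF conn2_sym[OF conn2_sum[OF b'(1) g' d]] b'(2)])
  then show ?thesis using Cl_iff[OF a] d by simp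
qed

lemma R_zero: "R (\<lambda>_. 0) n = (\<lambda>_. 0)" by (rule ext) (simp add: Rdef)

lemma sub_pre: "Vector_Spaces.linear sm sm f \<Longrightarrow> subspace S \<Longrightarrow> subspace {x. f x \<in> S}"
  unfolding subspace_def using linD[of f] lin_zero[of f] by simp

end


context HL begin

context
  fixes \<alpha> assumes a: "\<alpha> \<in> \<Lambda>"
begin

abbreviation "GH \<equiv> (\<Union>\<beta>\<in>Cl \<alpha>. {br x y | x y. x \<in> Lr \<beta> \<and> y \<in> Lr (neg_form \<beta>)})"
abbreviation "GV \<equiv> (\<Union>\<beta>\<in>Cl \<alpha>. Lr \<beta>)"
abbreviation "HC \<equiv> H_class sm Lg br \<phi> H \<alpha>"
abbreviation "VC \<equiv> V_class sm Lg br \<phi> H \<alpha>"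
abbreviation "LC \<equiv> L_class sm Lg br \<phi> H \<alpha>"

lemma HC_eq: "HC = span GH" unfolding H_class_def ..
lemma VC_eq: "VC = span GV" unfolding V_class_def ..

lemma LC_sub: "subspace LC" unfolding L_class_def H_class_def V_class_def
  by (rule subspace_sums) simp_all

lemma HC_LC: "x \<in> HC \<Longrightarrow> x \<in> LC" unfolding L_class_def V_class_def
  using span_zero by force
lemma VC_LC: "x \<in> VC \<Longrightarrow> x \<in> LC" unfolding L_class_def H_class_def
  using span_zero by force

lemma neg_zero: "(\<lambda>h. R \<beta> 1 h + R (neg_form \<beta>) 1 h) = (\<lambda>_. 0)"
  by (rule ext) (simp add: Rdef neg_form_def)

lemma HC_H: "HC \<subseteq> H"
  unfolding HC_eq
proof (rule span_minimal[OF _ H_sub])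
  show "GH \<subseteq> H"
  proof
    fix z assume "z \<in> GH"
    then obtain \<beta> x y where "z = br x y" "x \<in> Lr \<beta>" "y \<in> Lr (neg_form \<beta>)" by blast
    then have "z \<in> Lr (\<lambda>h. R \<beta> 1 h + R (neg_form \<beta>) 1 h)" using br_rs by blast
    then show "z \<in> H" unfolding neg_zero using rs0_H by blast
  qed
qed

lemma HV: assumes h: "h \<in> H" and v: "v \<in> VC" shows "br h v \<in> VC \<and> br v h \<in> VC"
  using v[unfolded VC_eq]
proof (induction rule: span_induct)
  case base
  have "subspace ({v. br h v \<in> VC} \<inter> {v. br v h \<in> VC})"
    by (intro subspace_inter sub_pre[OF linbr1] sub_pre[OF linbr2]) (simp_all add: V_class_def)
  then show ?case by (simp add: Collect_conj_eq)
next
  case (step x)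
  then obtain \<beta> where b: "\<beta> \<in> Cl \<alpha>" "x \<in> Lr \<beta>" by blast
  have h0: "h \<in> Lr (\<lambda>_. 0)" using H_rs0[OF h] .
  have "br h x \<in> Lr (R \<beta> 1)" using br_rs[OF h0 b(2)] by (simp add: R_zero)
  moreover have "br x h \<in> Lr (R \<beta> 1)" using br_rs[OF b(2) h0] by (simp add: R_zero)
  moreover have "R \<beta> 1 \<in> Cl \<alpha>" using cl_R1[OF a b(1)] .
  ultimately show ?case unfolding VC_eq using span_base by blast
qed

lemma sub_all1: "subspace S \<Longrightarrow> subspace {v. \<forall>w\<in>W. br v w \<in> S}"
  unfolding subspace_def by (simp add: br_01 br_add1 br_sc1)

lemma gen_case: assumes b: "\<beta> \<in> Cl \<alpha>" and x: "x \<in> Lr \<beta>" and g: "\<gamma> \<in> Cl \<alpha>" and y: "y \<in> Lr \<gamma>"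
  shows "br x y \<in> LC"
proof -
  define \<delta> where "\<delta> = (\<lambda>h. R \<beta> 1 h + R \<gamma> 1 h)"
  have xy: "br x y \<in> Lr \<delta>" unfolding \<delta>_def by (rule br_rs[OF x y])
  have br: "\<beta> \<in> \<Lambda>" and gr: "\<gamma> \<in> \<Lambda>" using b g Cl_iff[OF a] by auto
  show ?thesis
  proof (cases "\<delta> = (\<lambda>_. 0)")
    case z: True
    have "\<gamma> = neg_form \<beta>"
    proof (rule ext)
      fix h show "\<gamma> h = neg_form \<beta> h"
      proof (cases "h \<in> H0")
        case True
        have "\<delta> (\<phi> h) = 0" using z by simp
        then have "\<beta> h + \<gamma> h = 0" unfolding \<delta>_def using True by (simp add: R1' phi_H0)
        then show ?thesis unfolding neg_form_def by (simp add: eq_neg_iff_add_eq_0 add.commute)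
      next
        case False
        then show ?thesis using root_Z[OF br] root_Z[OF gr] unfolding Z_def neg_form_def by simp
      qed
    qed
    then have "br x y \<in> GH" using b x y by blast
    then have "br x y \<in> HC" unfolding HC_eq by (rule span_base)
    then show ?thesis by (rule HC_LC)
  next
    case False
    show ?thesis
    proof (cases "\<delta> \<in> \<Lambda>")
      case True
      then have "\<delta> \<in> Cl \<alpha>" unfolding \<delta>_def by (intro cl_sum[OF a b g]) (simp add: \<delta>_def)
      then have "br x y \<in> VC" unfolding VC_eq using xy span_base by blast
      then show ?thesis by (rule VC_LC)
    next
      case nr: False
      have "dual_form sm H0 \<delta>" unfolding \<delta>_def
        by (intro dual_add dual_R root_dual br gr)
      then have "br x y = 0" using nonroot False nr xy by blast
      then show ?thesis using subspace_0[OF LC_sub] by simp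
    qed
  qed
qed

lemma VV: assumes v: "v \<in> VC" and w: "w \<in> VC" shows "br v w \<in> LC"
proof -
  have "\<forall>w\<in>VC. br v w \<in> LC"
    using v[unfolded VC_eq]
  proof (induction rule: span_induct)
    case base
    show ?case using sub_all1[OF LC_sub] by simp
  next
    case (step x)
    then obtain \<beta> where b: "\<beta> \<in> Cl \<alpha>" "x \<in> Lr \<beta>" by blast
    show ?case
    proof
      fix w assume "w \<in> VC"
      then show "br x w \<in> LC" unfolding VC_eq
      proof (induction rule: span_induct)
        case base
        show ?case using sub_pre[OF linbr1 LC_sub] by simp
      next
        case (step y)
        then obtain \<gamma> where g: "\<gamma> \<in> Cl \<alpha>" "y \<in> Lr \<gamma>" by blast
        show ?case by (rule gen_case[OF b g])
      qed
    qed
  qed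
  then show ?thesis using w by blast
qed

lemma LC_br: assumes x: "x \<in> LC" and y: "y \<in> LC" shows "br x y \<in> LC"
proof -
  obtain h1 v1 where 1: "x = h1 + v1" "h1 \<in> HC" "v1 \<in> VC" using x unfolding L_class_def by blast
  obtain h2 v2 where 2: "y = h2 + v2" "h2 \<in> HC" "v2 \<in> VC" using y unfolding L_class_def by blast
  have "br x y = br h1 h2 + br h1 v2 + (br v1 h2 + br v1 v2)"
    unfolding 1(1) 2(1) br_add1 br_add2 by (simp add: algebra_simps)
  moreover have "br h1 h2 = 0" using ab_H HC_H 1(2) 2(2) by blast
  moreover have "br h1 v2 \<in> LC" using HV[OF _ 2(3)] HC_H 1(2) VC_LC by blast
  moreover have "br v1 h2 \<in> LC" using HV[OF _ 1(3)] HC_H 2(2) VC_LC by blast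
  moreover have "br v1 v2 \<in> LC" using VV[OF 1(3) 2(3)] .
  ultimately show ?thesis using subspace_add[OF LC_sub] subspace_0[OF LC_sub] by simp
qed

lemma map_LC:
  assumes lin: "Vector_Spaces.linear sm sm f"
    and fbr: "\<And>x y. f (br x y) = br (f x) (f y)"
    and frs: "\<And>x \<beta>. x \<in> Lr \<beta> \<Longrightarrow> f x \<in> Lr (T \<beta>)"
    and Tneg: "\<And>\<beta>. T (neg_form \<beta>) = neg_form (T \<beta>)"
    and Tcl: "\<And>\<beta>. \<beta> \<in> Cl \<alpha> \<Longrightarrow> T \<beta> \<in> Cl \<alpha>"
    and z: "z \<in> LC"
  shows "f z \<in> LC"
proof -
  obtain h v where hv: "z = h + v" "h \<in> HC" "v \<in> VC" using z unfolding L_class_def by blast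
  have "f h \<in> HC" using hv(2)[unfolded HC_eq]
  proof (induction rule: span_induct)
    case base show ?case using sub_pre[OF lin, of HC] by (simp add: H_class_def)
  next
    case (step u)
    then obtain \<beta> x y where u: "\<beta> \<in> Cl \<alpha>" "u = br x y" "x \<in> Lr \<beta>" "y \<in> Lr (neg_form \<beta>)" by blast
    have "f u = br (f x) (f y)" using u(2) fbr by simp
    moreover have "f x \<in> Lr (T \<beta>)" "f y \<in> Lr (neg_form (T \<beta>))" using frs u(3,4) Tneg by metis+
    ultimately have "f u \<in> GH" using Tcl[OF u(1)] by blast
    then show ?case unfolding HC_eq by (rule span_base)
  qed
  moreover have "f v \<in> VC" using hv(3)[unfolded VC_eq]
  proof (induction rule: span_induct)
    case base show ?case using sub_pre[OF lin, of VC] by (simp add: V_class_def)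
  next
    case (step u)
    then obtain \<beta> where u: "\<beta> \<in> Cl \<alpha>" "u \<in> Lr \<beta>" by blast
    have "f u \<in> GV" using frs[OF u(2)] Tcl[OF u(1)] by blast
    then show ?case unfolding VC_eq by (rule span_base)
  qed
  ultimately show ?thesis unfolding hv(1) L_class_def using linD[OF lin] by blast
qed

lemma main_loc: "(\<forall>x\<in>LC. \<forall>y\<in>LC. br x y \<in> LC) \<and> \<phi> ` LC = LC"
proof (intro conjI ballI)
  fix x y assume "x \<in> LC" "y \<in> LC" then show "br x y \<in> LC" by (rule LC_br)
next
  have phi: "\<phi> z \<in> LC" if "z \<in> LC" for z
    by (rule map_LC[where f=\<phi> and T="\<lambda>\<beta>. R \<beta> 1", OF linphi phi_br phi_rs R_negf cl_R1[OF a] that])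
  have psi: "\<psi> z \<in> LC" if "z \<in> LC" for z
    by (rule map_LC[where f=\<psi> and T=Pf, OF linpsi psi_br psi_rs Pf_neg cl_Pf[OF a] that])
  show "\<phi> ` LC = LC"
  proof
    show "\<phi> ` LC \<subseteq> LC" using phi by blast
    show "LC \<subseteq> \<phi> ` LC"
    proof
      fix z assume "z \<in> LC"
      then have "\<psi> z \<in> LC" by (rule psi)
      then show "z \<in> \<phi> ` LC" by (metis image_eqI phi_psi)
    qed
  qed
qed

end
end

theorem mainTheorem7:
  fixes sm :: "'k::field \<Rightarrow> 'v::ab_group_add \<Rightarrow> 'v"
    and Lg :: "'g::ab_group_add \<Rightarrow> 'v set"
    and br :: "'v \<Rightarrow> 'v \<Rightarrow> 'v"
    and \<phi> :: "'v \<Rightarrow> 'v"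
    and \<epsilon> :: "'g \<Rightarrow> 'g \<Rightarrow> 'k"
    and H :: "'v set"
    and \<alpha> :: "'v \<Rightarrow> 'k"
  assumes "hom_lie_color sm Lg br \<phi> \<epsilon>"
    and "bij \<phi>"
    and "max_abelian_graded_subalgebra sm Lg br \<phi> H"
    and "is_split sm Lg br \<phi> H"
    and "symmetric_roots sm Lg br \<phi> H"
    and "\<alpha> \<in> roots sm Lg br \<phi> H"
  shows "(\<forall>x\<in>L_class sm Lg br \<phi> H \<alpha>. \<forall>y\<in>L_class sm Lg br \<phi> H \<alpha>. br x y \<in> L_class sm Lg br \<phi> H \<alpha>)
         \<and> \<phi> ` L_class sm Lg br \<phi> H \<alpha> = L_class sm Lg br \<phi> H \<alpha>"
proof -
  interpret HL sm Lg br \<phi> \<epsilon> H using assms(1-5) by unfold_locales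
  show ?thesis by (rule main_loc[OF assms(6)])
qed

end
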